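(* Let $A\in\mathbb{N}^{n\times m}$ have distinct columns. If $c\in\mathbb{R}^m$ generates an extreme ray of $C_{\mathrm{POLY\text{-}SAGE}}(A)$, then $\{a_i: i\in[m],\ c_i\ne 0\}$ is either a singleton or a simplicial circuit.
   Context: For $A\in\mathbb{N}^{n\times m}$ with distinct columns $a_i$ and $c\in\mathbb{R}^m$, a column $a_i$ is even if $a_i\in(2\mathbb{N})^n$. $\mathrm{Sig}(A,c)$ is $x\mapsto\sum_i c_i\exp(a_i^\top x)$; $C_{\mathrm{NNS}}(A)=\{c:\mathrm{Sig}(A,c)\ge 0\text{ on }\mathbb{R}^n\}$; $C_{\mathrm{AGE}}(A,k)=\{c\in C_{\mathrm{NNS}}(A): c_i\ge 0\ \forall i\ne k\}$; $C_{\mathrm{SAGE}}(A)=\sum_k C_{\mathrm{AGE}}(A,k)$. The signomial representative of $c$ is $\hat c$ with $\hat c_i=c_i$ if $a_i$ is even and $\hat c_i=-|c_i|$ otherwise; $C_{\mathrm{POLY\text{-}SAGE}}(A)=\{c\in\mathbb{R}^m:\hat c\in C_{\mathrm{SAGE}}(A)\}$. A finite point set $\{x_1,\dots,x_\ell\}$ is a circuit if it is affinely dependent but every proper subset is affinely independent; a circuit with $\ell$ elements is simplicial if its convex hull has exactly $\ell-1$ extreme points. *)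

theory Defs
  imports "HOL-Analysis.Analysis"
begin

text \<open>The matrix A in N^(n x m) is represented as A :: nat^'m^'n (rows indexed by 'n,
  columns by 'm). Column i, viewed as a point of R^n:\<close>
definition acol :: "nat^'m^'n \<Rightarrow> 'm \<Rightarrow> real^'n" where
  "acol A i = (\<chi> j. real (A $ j $ i))"

definition distinct_columns :: "nat^'m^'n \<Rightarrow> bool" where
  "distinct_columns A \<longleftrightarrow> (\<forall>i k. (\<chi> j. A $ j $ i) = (\<chi> j. A $ j $ k) \<longrightarrow> i = k)"

definition even_col :: "nat^'m^'n \<Rightarrow> 'm \<Rightarrow> bool" where
  "even_col A i \<longleftrightarrow> (\<forall>j. even (A $ j $ i))"

definition Sig :: "nat^'m::finite^'n \<Rightarrow> real^'m \<Rightarrow> real^'n \<Rightarrow> real" where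
  "Sig A c x = (\<Sum>i\<in>UNIV. c $ i * exp (acol A i \<bullet> x))"

definition C_NNS :: "nat^'m::finite^'n \<Rightarrow> (real^'m) set" where
  "C_NNS A = {c. \<forall>x. Sig A c x \<ge> 0}"

definition C_AGE :: "nat^'m::finite^'n \<Rightarrow> 'm \<Rightarrow> (real^'m) set" where
  "C_AGE A k = {c \<in> C_NNS A. \<forall>i. i \<noteq> k \<longrightarrow> c $ i \<ge> 0}"

definition C_SAGE :: "nat^'m::finite^'n \<Rightarrow> (real^'m) set" where
  "C_SAGE A = {c. \<exists>f :: 'm \<Rightarrow> real^'m. (\<forall>k. f k \<in> C_AGE A k) \<and> c = (\<Sum>k\<in>UNIV. f k)}"

definition sig_rep :: "nat^'m^'n \<Rightarrow> real^'m \<Rightarrow> real^'m" where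
  "sig_rep A c = (\<chi> i. if even_col A i then c $ i else - \<bar>c $ i\<bar>)"

definition C_POLY_SAGE :: "nat^'m::finite^'n \<Rightarrow> (real^'m) set" where
  "C_POLY_SAGE A = {c. sig_rep A c \<in> C_SAGE A}"

definition extreme_ray_gen :: "('a::real_vector) set \<Rightarrow> 'a \<Rightarrow> bool" where
  "extreme_ray_gen C c \<longleftrightarrow> c \<in> C \<and> c \<noteq> 0 \<and>
     (\<forall>x y. x \<in> C \<longrightarrow> y \<in> C \<longrightarrow> c = x + y \<longrightarrow>
        (\<exists>s t. s \<ge> 0 \<and> t \<ge> 0 \<and> x = s *\<^sub>R c \<and> y = t *\<^sub>R c))"

definition is_circuit :: "('a::real_vector) set \<Rightarrow> bool" where
  "is_circuit S \<longleftrightarrow> finite S \<and> affine_dependent S \<and> (\<forall>T. T \<subset> S \<longrightarrow> \<not> affine_dependent T)"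

definition simplicial_circuit :: "('a::euclidean_space) set \<Rightarrow> bool" where
  "simplicial_circuit S \<longleftrightarrow> is_circuit S \<and>
     card {x. x extreme_point_of (convex hull S)} = card S - 1"

end

theory Submission
  imports Defs "HOL-Real_Asymp.Real_Asymp"
begin

lemma xlnx_cont: "continuous_on {0..} (\<lambda>x::real. x * ln x)"
proof -
  have "continuous (at x within {0..}) (\<lambda>x::real. x * ln x)" if "x \<in> {0..}" for x
  proof (cases "x = 0")
    case True
    have "((\<lambda>x::real. x * ln x) \<longlongrightarrow> 0) (at_right 0)" by real_asymp
    then show ?thesis using True by (simp add: continuous_within at_within_Ici_at_right)
  next
    case False
    with that have "x > 0" by auto
    then have "isCont (\<lambda>x::real. x * ln x) x" by (intro continuous_intros) auto
    then show ?thesis using continuous_at_imp_continuous_within by blast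
  qed
  then show ?thesis using continuous_on_eq_continuous_within by blast
qed

lemma xlnx_tendsto:
  fixes X :: "nat \<Rightarrow> real"
  assumes "\<And>n. 0 \<le> X n" "X \<longlonglongrightarrow> y"
  shows "(\<lambda>n. X n * ln (X n)) \<longlonglongrightarrow> y * ln y"
proof -
  have "y \<ge> 0" using assms by (meson LIMSEQ_le_const)
  then show ?thesis
    using continuous_on_tendsto_compose[OF xlnx_cont assms(2)] assms(1) by auto
qed

lemma cert:
  fixes R :: "'a set" and \<nu> w :: "'a \<Rightarrow> real" and p :: "'a \<Rightarrow> 'b::real_inner"
  assumes "finite R" "\<And>j. j \<in> R \<Longrightarrow> \<nu> j > 0" "\<And>j. j \<in> R \<Longrightarrow> w j > 0"
    "sum \<nu> R = 1"
  shows "exp ((\<Sum>j\<in>R. \<nu> j * ln (w j) - \<nu> j * ln (\<nu> j)) + inner (\<Sum>j\<in>R. \<nu> j *\<^sub>R p j) x)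
     \<le> (\<Sum>j\<in>R. w j * exp (inner (p j) x))"
proof -
  have ne: "R \<noteq> {}" using assms(4) by auto
  define y where "y j = ln (w j) - ln (\<nu> j) + inner (p j) x" for j
  have "exp (\<Sum>j\<in>R. \<nu> j *\<^sub>R y j) \<le> (\<Sum>j\<in>R. \<nu> j * exp (y j))"
    using convex_on_sum[OF assms(1) ne exp_convex, of \<nu> y] assms(2,4) by (auto simp: less_imp_le)
  moreover have "(\<Sum>j\<in>R. \<nu> j *\<^sub>R y j) = (\<Sum>j\<in>R. \<nu> j * ln (w j) - \<nu> j * ln (\<nu> j)) + inner (\<Sum>j\<in>R. \<nu> j *\<^sub>R p j) x"
    by (simp add: y_def inner_sum_left sum.distrib algebra_simps sum_subtractf)
  moreover have "(\<Sum>j\<in>R. \<nu> j * exp (y j)) = (\<Sum>j\<in>R. w j * exp (inner (p j) x))"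
  proof (rule sum.cong)
    fix j assume j: "j \<in> R"
    show "\<nu> j * exp (y j) = w j * exp (inner (p j) x)"
      using assms(2,3)[OF j] by (simp add: y_def exp_add exp_diff)
  qed simp
  ultimately show ?thesis by simp
qed

lemma approx_nu:
  fixes T :: "'m set" and w :: "'m \<Rightarrow> real" and p :: "'m \<Rightarrow> real^'n::finite"
  assumes fin: "finite T" and bpos: "\<beta> > 0" and wpos: "\<And>j. j\<in>T \<Longrightarrow> w j > 0"
    and nn: "\<And>x. \<beta> \<le> (\<Sum>j\<in>T. w j * exp (p j \<bullet> x))" and dpos: "\<delta> > 0"
  shows "\<exists>\<nu>. (\<forall>j\<in>T. 0 < \<nu> j) \<and> sum \<nu> T = 1 \<and> norm (\<Sum>j\<in>T. \<nu> j *\<^sub>R p j) \<le> \<delta>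
           \<and> ln \<beta> \<le> (\<Sum>j\<in>T. \<nu> j * ln (w j) - \<nu> j * ln (\<nu> j))"
proof -
  define g where "g x = (\<Sum>j\<in>T. w j * exp (p j \<bullet> x))" for x
  define G0 where "G0 = g 0"
  have gb: "\<beta> \<le> g x" for x using nn g_def by auto
  have G0: "\<beta> \<le> G0" using gb G0_def by auto
  define \<epsilon> where "\<epsilon> = \<delta>\<^sup>2 * \<beta>\<^sup>2 / (4 * G0)"
  have epos: "\<epsilon> > 0" using bpos dpos G0 by (simp add: \<epsilon>_def)
  define F where "F x = g x + \<epsilon> * (x \<bullet> x)" for x
  define r where "r = sqrt (G0/\<epsilon>)"
  have r0: "r \<ge> 0" using G0 bpos epos by (simp add: r_def)
  have cont: "continuous_on (cball 0 r) F" unfolding F_def g_def by (intro continuous_intros)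
  obtain x0 where x0K: "x0 \<in> cball 0 r" and min: "\<forall>y\<in>cball 0 r. F x0 \<le> F y"
    using continuous_attains_inf[OF compact_cball _ cont] r0 by fastforce
  have F0: "F 0 = G0" by (simp add: F_def G0_def)
  have gmin: "F x0 \<le> F y" for y
  proof (cases "y \<in> cball 0 r")
    case True then show ?thesis using min by auto
  next
    case False
    then have "norm y > r" by auto
    then have "(norm y)\<^sup>2 > r\<^sup>2" using r0 by (simp add: power_strict_mono)
    moreover have "r\<^sup>2 = G0/\<epsilon>" using G0 bpos epos by (simp add: r_def)
    ultimately have "y \<bullet> y > G0/\<epsilon>" by (simp add: power2_norm_eq_inner)
    then have "\<epsilon> * (y \<bullet> y) > G0" using epos by (simp add: field_simps)
    moreover have "g y \<ge> 0" using gb[of y] bpos by auto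
    ultimately have "F y > F 0" using F0 by (simp add: F_def)
    moreover have "F x0 \<le> F 0" using min r0 by auto
    ultimately show ?thesis by simp
  qed
  define G where "G = (\<Sum>j\<in>T. (w j * exp (p j \<bullet> x0)) *\<^sub>R p j) + (2*\<epsilon>) *\<^sub>R x0"
  have G0eq: "G = 0"
  proof -
    define \<phi> where "\<phi> t = F (x0 + t *\<^sub>R G)" for t
    have \<phi>eq: "\<phi> = (\<lambda>t. (\<Sum>j\<in>T. w j * exp (p j \<bullet> x0 + t * (p j \<bullet> G))) + \<epsilon> * (x0 \<bullet> x0 + 2*t*(x0 \<bullet> G) + t\<^sup>2 * (G \<bullet> G)))"
      by (rule ext) (simp add: \<phi>_def F_def g_def inner_add_left inner_add_right power2_eq_square algebra_simps inner_commute)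
    have D: "(\<phi> has_real_derivative ((\<Sum>j\<in>T. w j * exp (p j \<bullet> x0) * (p j \<bullet> G)) + \<epsilon> * (2*(x0 \<bullet> G)))) (at 0)"
      unfolding \<phi>eq by (auto intro!: derivative_eq_intros sum.cong simp: mult_ac)
    have "\<forall>y. \<bar>0 - y\<bar> < 1 \<longrightarrow> \<phi> 0 \<le> \<phi> y" using gmin by (simp add: \<phi>_def)
    from DERIV_local_min[OF D _ this]
    have "(\<Sum>j\<in>T. w j * exp (p j \<bullet> x0) * (p j \<bullet> G)) + \<epsilon> * (2*(x0 \<bullet> G)) = 0" by simp
    moreover have "G \<bullet> G = (\<Sum>j\<in>T. (w j * exp (p j \<bullet> x0)) *\<^sub>R p j) \<bullet> G + (2*\<epsilon>) * (x0 \<bullet> G)"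
      by (subst (1) G_def) (simp add: inner_add_left)
    moreover have "(\<Sum>j\<in>T. (w j * exp (p j \<bullet> x0)) *\<^sub>R p j) \<bullet> G = (\<Sum>j\<in>T. w j * exp (p j \<bullet> x0) * (p j \<bullet> G))"
      by (simp add: inner_sum_left)
    ultimately show ?thesis by (simp add: algebra_simps)
  qed
  define gx where "gx = g x0"
  have gx: "\<beta> \<le> gx" "gx > 0" using gb[of x0] bpos by (auto simp: gx_def)
  define \<nu> where "\<nu> j = w j * exp (p j \<bullet> x0) / gx" for j
  have \<nu>pos: "\<forall>j\<in>T. 0 < \<nu> j" using wpos gx by (simp add: \<nu>_def)
  have \<nu>sum: "sum \<nu> T = 1" using gx by (simp add: \<nu>_def gx_def g_def sum_divide_distrib[symmetric])
  have S: "(\<Sum>j\<in>T. (w j * exp (p j \<bullet> x0)) *\<^sub>R p j) = - ((2*\<epsilon>) *\<^sub>R x0)"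
    using G0eq by (simp add: G_def add_eq_0_iff)
  have \<nu>p: "(\<Sum>j\<in>T. \<nu> j *\<^sub>R p j) = - ((2*\<epsilon>/gx) *\<^sub>R x0)"
  proof -
    have "(\<Sum>j\<in>T. \<nu> j *\<^sub>R p j) = (1/gx) *\<^sub>R (\<Sum>j\<in>T. (w j * exp (p j \<bullet> x0)) *\<^sub>R p j)"
      by (simp add: \<nu>_def scaleR_sum_right divide_inverse mult.commute)
    then show ?thesis using S by simp
  qed
  have ex: "\<epsilon> * (x0 \<bullet> x0) \<le> G0"
    using gmin[of 0] F0 gb[of x0] bpos by (simp add: F_def)
  have nrm: "norm (\<Sum>j\<in>T. \<nu> j *\<^sub>R p j) \<le> \<delta>"
  proof (rule power2_le_imp_le)
    have "(norm (\<Sum>j\<in>T. \<nu> j *\<^sub>R p j))\<^sup>2 = (2*\<epsilon>/gx)\<^sup>2 * (x0 \<bullet> x0)"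
      using \<nu>p epos gx by (simp add: power2_norm_eq_inner[symmetric] power_mult_distrib power_divide)
    also have "\<dots> = 4 * \<epsilon> * (\<epsilon> * (x0 \<bullet> x0)) / gx\<^sup>2" by (simp add: power2_eq_square field_simps)
    also have "\<dots> \<le> 4 * \<epsilon> * G0 / gx\<^sup>2"
      using ex epos gx by (intro divide_right_mono mult_left_mono) auto
    also have "\<dots> \<le> 4 * \<epsilon> * G0 / \<beta>\<^sup>2"
      using gx bpos epos G0 by (intro divide_left_mono mult_pos_pos power_mono) auto
    also have "\<dots> = \<delta>\<^sup>2" using bpos G0 by (simp add: \<epsilon>_def)
    finally show "(norm (\<Sum>j\<in>T. \<nu> j *\<^sub>R p j))\<^sup>2 \<le> \<delta>\<^sup>2" .
  qed (use dpos in auto)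
  have ent: "(\<Sum>j\<in>T. \<nu> j * ln (w j) - \<nu> j * ln (\<nu> j)) = ln gx + 2*\<epsilon>*(x0 \<bullet> x0)/gx"
  proof -
    have "(\<Sum>j\<in>T. \<nu> j * ln (w j) - \<nu> j * ln (\<nu> j)) = (\<Sum>j\<in>T. \<nu> j * ln gx - \<nu> j * (p j \<bullet> x0))"
    proof (rule sum.cong)
      fix j assume j: "j \<in> T"
      have "ln (\<nu> j) = ln (w j) + p j \<bullet> x0 - ln gx"
        using wpos[OF j] gx by (simp add: \<nu>_def ln_div ln_mult)
      then have "\<nu> j * ln (\<nu> j) = \<nu> j * (ln (w j) + p j \<bullet> x0 - ln gx)" by simp
      then show "\<nu> j * ln (w j) - \<nu> j * ln (\<nu> j) = \<nu> j * ln gx - \<nu> j * (p j \<bullet> x0)"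
        by (simp add: algebra_simps)
    qed simp
    also have "\<dots> = ln gx - (\<Sum>j\<in>T. \<nu> j *\<^sub>R p j) \<bullet> x0"
      by (simp add: sum_subtractf sum_distrib_right[symmetric] \<nu>sum inner_sum_left)
    also have "\<dots> = ln gx + 2*\<epsilon>*(x0 \<bullet> x0)/gx" using \<nu>p by simp
    finally show ?thesis .
  qed
  have "ln \<beta> \<le> ln gx" using gx bpos by simp
  also have "\<dots> \<le> ln gx + 2*\<epsilon>*(x0 \<bullet> x0)/gx" using epos gx by simp
  finally have "ln \<beta> \<le> (\<Sum>j\<in>T. \<nu> j * ln (w j) - \<nu> j * ln (\<nu> j))" using ent by simp
  then show ?thesis using \<nu>pos \<nu>sum nrm by blast
qed

lemma exists_nu:
  fixes T :: "'m::finite set" and w :: "'m \<Rightarrow> real" and p :: "'m \<Rightarrow> real^'n::finite"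
  assumes bpos: "\<beta> > 0" and wpos: "\<And>j. j\<in>T \<Longrightarrow> w j > 0"
    and nn: "\<And>x. \<beta> \<le> (\<Sum>j\<in>T. w j * exp (p j \<bullet> x))"
  shows "\<exists>\<nu>. (\<forall>j\<in>T. 0 \<le> \<nu> j) \<and> sum \<nu> T = 1 \<and> (\<Sum>j\<in>T. \<nu> j *\<^sub>R p j) = 0
           \<and> ln \<beta> \<le> (\<Sum>j\<in>T. \<nu> j * ln (w j) - \<nu> j * ln (\<nu> j))"
proof -
  have fin: "finite T" by simp
  define P where "P n \<nu> \<longleftrightarrow> (\<forall>j\<in>T. 0 < \<nu> j) \<and> sum \<nu> T = 1 \<and> norm (\<Sum>j\<in>T. \<nu> j *\<^sub>R p j) \<le> inverse (real (Suc n))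
           \<and> ln \<beta> \<le> (\<Sum>j\<in>T. \<nu> j * ln (w j) - \<nu> j * ln (\<nu> j))" for n :: nat and \<nu>
  have "\<forall>n. \<exists>\<nu>. P n \<nu>"
  proof
    fix n
    show "\<exists>\<nu>. P n \<nu>" unfolding P_def
      by (rule approx_nu[OF fin bpos wpos nn]) (auto simp del: of_nat_Suc)
  qed
  then obtain N where NP: "\<And>n. P n (N n)" using choice by blast
  have N: "(\<forall>j\<in>T. 0 < N n j) \<and> sum (N n) T = 1 \<and> norm (\<Sum>j\<in>T. N n j *\<^sub>R p j) \<le> inverse (real (Suc n))
           \<and> ln \<beta> \<le> (\<Sum>j\<in>T. N n j * ln (w j) - N n j * ln (N n j))" for n
    using NP[of n] unfolding P_def .
  define V where "V n = (\<chi> j. if j \<in> T then N n j else 0)" for n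
  have Vin: "V n \<in> cbox 0 (\<chi> j. 1)" for n
  proof -
    have "N n j \<le> 1" if "j \<in> T" for j
    proof -
      have "N n j \<le> sum (N n) T"
        using N[of n] that by (intro member_le_sum) (auto intro: less_imp_le)
      then show ?thesis using N[of n] by simp
    qed
    then show ?thesis using N[of n] by (auto simp: mem_box_cart V_def less_imp_le)
  qed
  have "seq_compact (cbox (0::real^'m) (\<chi> j. 1))" by (rule compact_imp_seq_compact, rule compact_cbox)
  then obtain l r where lin: "l \<in> cbox 0 (\<chi> j. 1)" and r: "strict_mono r" and lim: "(V \<circ> r) \<longlonglongrightarrow> l"
    by (rule seq_compactE[where f=V]) (use Vin in auto)
  define \<nu> where "\<nu> j = l $ j" for j
  have comp: "(\<lambda>n. N (r n) j) \<longlonglongrightarrow> \<nu> j" if "j \<in> T" for j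
  proof -
    have "(\<lambda>n. (V \<circ> r) n $ j) \<longlonglongrightarrow> l $ j" using lim by (intro tendsto_vec_nth)
    then show ?thesis using that by (simp add: V_def \<nu>_def o_def)
  qed
  have nonneg: "\<forall>j\<in>T. 0 \<le> \<nu> j" using lin by (auto simp: mem_box_cart \<nu>_def)
  have "(\<lambda>n. sum (N (r n)) T) \<longlonglongrightarrow> sum \<nu> T" by (intro tendsto_sum comp)
  moreover have "(\<lambda>n. sum (N (r n)) T) = (\<lambda>n. 1)" using N by auto
  ultimately have sum1: "sum \<nu> T = 1" using LIMSEQ_unique[of "\<lambda>n. 1"] by (metis tendsto_const)
  have L1: "(\<lambda>n. norm (\<Sum>j\<in>T. N (r n) j *\<^sub>R p j)) \<longlonglongrightarrow> norm (\<Sum>j\<in>T. \<nu> j *\<^sub>R p j)"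
    by (intro tendsto_norm tendsto_sum tendsto_scaleR comp tendsto_const)
  have L2: "(\<lambda>n. inverse (real (Suc n))) \<longlonglongrightarrow> 0" by (rule LIMSEQ_inverse_real_of_nat)
  have le: "norm (\<Sum>j\<in>T. N (r n) j *\<^sub>R p j) \<le> inverse (real (Suc n))" for n
  proof -
    have "n \<le> r n" using r by (simp add: seq_suble)
    then have "inverse (real (Suc (r n))) \<le> inverse (real (Suc n))" by (simp add: le_imp_inverse_le)
    then show ?thesis using N[of "r n"] by linarith
  qed
  have "norm (\<Sum>j\<in>T. \<nu> j *\<^sub>R p j) \<le> 0"
    using tendsto_le[OF trivial_limit_sequentially L2 L1] le by simp
  then have zero: "(\<Sum>j\<in>T. \<nu> j *\<^sub>R p j) = 0" by simp
  have L3: "(\<lambda>n. (\<Sum>j\<in>T. N (r n) j * ln (w j) - N (r n) j * ln (N (r n) j))) \<longlonglongrightarrow>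
            (\<Sum>j\<in>T. \<nu> j * ln (w j) - \<nu> j * ln (\<nu> j))"
  proof (rule tendsto_sum, rule tendsto_diff)
    fix j assume j: "j \<in> T"
    show "(\<lambda>n. N (r n) j * ln (w j)) \<longlonglongrightarrow> \<nu> j * ln (w j)"
      by (intro tendsto_mult comp[OF j] tendsto_const)
    show "(\<lambda>n. N (r n) j * ln (N (r n) j)) \<longlonglongrightarrow> \<nu> j * ln (\<nu> j)"
      using xlnx_tendsto[OF _ comp[OF j]] N j by (auto intro: less_imp_le)
  qed
  have "ln \<beta> \<le> (\<Sum>j\<in>T. \<nu> j * ln (w j) - \<nu> j * ln (\<nu> j))"
    using tendsto_le[OF trivial_limit_sequentially L3 tendsto_const] N by auto
  then show ?thesis using nonneg sum1 zero by blast
qed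

lemma Sig_add: "Sig A (u + v) x = Sig A u x + Sig A v x"
  by (simp add: Sig_def sum.distrib distrib_right)

lemma Sig_scale: "Sig A (s *\<^sub>R u) x = s * Sig A u x"
  by (simp add: Sig_def sum_distrib_left mult.assoc)

lemma Sig_zero: "Sig A 0 x = 0"
  by (simp add: Sig_def)

lemma AGE_add: "u \<in> C_AGE A k \<Longrightarrow> v \<in> C_AGE A k \<Longrightarrow> u + v \<in> C_AGE A k"
  by (auto simp: C_AGE_def C_NNS_def Sig_add add_nonneg_nonneg)

lemma AGE_scale: "u \<in> C_AGE A k \<Longrightarrow> s \<ge> 0 \<Longrightarrow> s *\<^sub>R u \<in> C_AGE A k"
  by (auto simp: C_AGE_def C_NNS_def Sig_scale)

lemma AGE_zero: "0 \<in> C_AGE A k"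
  by (auto simp: C_AGE_def C_NNS_def Sig_zero)

lemma AGE_nonneg: "(\<And>i. 0 \<le> u $ i) \<Longrightarrow> u \<in> C_AGE A k"
  by (auto simp: C_AGE_def C_NNS_def Sig_def intro!: sum_nonneg)

lemma SAGE_sum:
  assumes "\<And>k. k \<in> K \<Longrightarrow> f k \<in> C_AGE A k"
  shows "(\<Sum>k\<in>K. f k) \<in> C_SAGE A"
proof -
  define g where "g k = (if k \<in> K then f k else 0)" for k
  have "\<forall>k. g k \<in> C_AGE A k" using assms AGE_zero[of A] by (simp add: g_def)
  moreover have "(\<Sum>k\<in>K. f k) = (\<Sum>k\<in>UNIV. g k)"
    by (simp add: g_def sum.If_cases)
  ultimately show ?thesis by (auto simp: C_SAGE_def)
qed

lemma AGE_SAGE: "u \<in> C_AGE A k \<Longrightarrow> u \<in> C_SAGE A"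
  using SAGE_sum[of "{k}" "\<lambda>_. u" A] by auto

lemma sig_rep_nth: "sig_rep A c $ i = (if even_col A i then c $ i else - \<bar>c $ i\<bar>)"
  by (simp add: sig_rep_def)

lemma sig_rep_scale: "s \<ge> 0 \<Longrightarrow> sig_rep A (s *\<^sub>R c) = s *\<^sub>R sig_rep A c"
  by (auto simp: vec_eq_iff sig_rep_nth abs_mult)

lemma sig_rep_zero_iff: "sig_rep A c $ i = 0 \<longleftrightarrow> c $ i = 0"
  by (simp add: sig_rep_nth)

lemma POLY_I: "sig_rep A x \<in> C_AGE A k \<Longrightarrow> x \<in> C_POLY_SAGE A"
  by (simp add: C_POLY_SAGE_def AGE_SAGE)

lemma process:
  fixes d :: "real^'m::finite" and A :: "nat^'m^'n::finite"
  assumes "d \<in> C_SAGE A"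
  shows "\<exists>f. (\<forall>k. f k \<in> C_AGE A k) \<and> (\<Sum>k\<in>UNIV. f k) = d \<and>
             (\<forall>i k. d $ i \<le> 0 \<longrightarrow> k \<noteq> i \<longrightarrow> f k $ i = 0)"
proof -
  have main: "M \<subseteq> {i. d $ i \<le> 0} \<Longrightarrow> \<exists>f. (\<forall>k. f k \<in> C_AGE A k) \<and> (\<Sum>k\<in>UNIV. f k) = d \<and>
             (\<forall>i\<in>M. \<forall>k. k \<noteq> i \<longrightarrow> f k $ i = 0)" if "finite M" for M
    using that
  proof (induction M rule: finite_induct)
    case empty
    then show ?case using assms by (auto simp: C_SAGE_def)
  next
    case (insert i M)
    then obtain f where fA: "\<forall>k. f k \<in> C_AGE A k" and fs: "(\<Sum>k\<in>UNIV. f k) = d"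
      and fz: "\<forall>i\<in>M. \<forall>k. k \<noteq> i \<longrightarrow> f k $ i = 0" by auto
    have di: "d $ i \<le> 0" using insert by auto
    have oth: "0 \<le> f k $ j" if "k \<noteq> j" for k j using fA that by (auto simp: C_AGE_def)
    define a where "a = f i $ i"
    have sumi: "a + (\<Sum>k\<in>UNIV-{i}. f k $ i) = d $ i"
    proof -
      have "(\<Sum>k\<in>UNIV. f k $ i) = d $ i" using fs by (metis sum_component)
      then show ?thesis by (simp add: a_def sum.remove[of UNIV i])
    qed
    have rest_nn: "0 \<le> (\<Sum>k\<in>UNIV-{i}. f k $ i)" using oth by (intro sum_nonneg) auto
    have a0: "a \<le> 0" using sumi rest_nn di by linarith
    define t where "t k = (if k = i then 0 else f k $ i / (- a))" for k
    define s where "s = (\<Sum>k\<in>UNIV. t k)"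
    have t0: "0 \<le> t k" for k using oth[of k i] a0 by (auto simp: t_def divide_nonneg_nonpos)
    have s_eq: "s = (\<Sum>k\<in>UNIV-{i}. f k $ i) / (- a)"
      by (simp add: s_def t_def sum.remove[of UNIV i] sum_divide_distrib sum_negf)
    have s1: "s \<le> 1"
    proof (cases "a = 0")
      case True then show ?thesis by (simp add: s_eq)
    next
      case False
      then have "-a > 0" using a0 by simp
      moreover have "(\<Sum>k\<in>UNIV-{i}. f k $ i) \<le> -a" using sumi di by linarith
      ultimately show ?thesis by (subst s_eq, subst divide_le_eq_1_pos) auto
    qed
    have azero: "f k $ i = 0" if "a = 0" "k \<noteq> i" for k
    proof -
      have "(\<Sum>k\<in>UNIV-{i}. f k $ i) = 0" using sumi di rest_nn that by simp
      then have "\<forall>k\<in>UNIV-{i}. f k $ i = 0"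
        using oth by (subst (asm) sum_nonneg_eq_0_iff) auto
      then show ?thesis using that by auto
    qed
    have kill: "f k $ i + t k * a = 0" if "k \<noteq> i" for k
      using that azero by (cases "a = 0") (auto simp: t_def)
    define f' where "f' k = f k + t k *\<^sub>R f i - (if k = i then s *\<^sub>R f i else 0)" for k
    have f'A: "f' k \<in> C_AGE A k" for k
    proof (cases "k = i")
      case True
      then have "f' k = (1 - s) *\<^sub>R f i" by (simp add: f'_def t_def algebra_simps)
      moreover have "(1 - s) *\<^sub>R f i \<in> C_AGE A i" using AGE_scale[of "f i" A i "1 - s"] fA s1 by auto
      ultimately show ?thesis using True by simp
    next
      case False
      then have eq: "f' k = f k + t k *\<^sub>R f i" by (simp add: f'_def)
      have "f k + t k *\<^sub>R f i \<in> C_NNS A"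
        using fA AGE_scale[of "f i" A i "t k"] t0 AGE_add[of "f k" A k]
        by (auto simp: C_AGE_def C_NNS_def Sig_add Sig_scale add_nonneg_nonneg)
      moreover have "0 \<le> (f k + t k *\<^sub>R f i) $ j" if "j \<noteq> k" for j
      proof (cases "j = i")
        case True then show ?thesis using kill False a_def by simp
      next
        case False
        then show ?thesis using oth[of k j] that oth[of i j] t0[of k] by simp
      qed
      ultimately show ?thesis using eq by (simp add: C_AGE_def)
    qed
    have f's: "(\<Sum>k\<in>UNIV. f' k) = d"
    proof -
      have "(\<Sum>k\<in>UNIV. f' k) = (\<Sum>k\<in>UNIV. f k) + (\<Sum>k\<in>UNIV. t k *\<^sub>R f i) - (\<Sum>k\<in>UNIV. (if k = i then s *\<^sub>R f i else 0))"
        by (simp add: f'_def sum.distrib sum_subtractf)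
      also have "\<dots> = d" using fs by (simp add: s_def scaleR_sum_left[symmetric])
      finally show ?thesis .
    qed
    have f'z: "\<forall>i'\<in>insert i M. \<forall>k. k \<noteq> i' \<longrightarrow> f' k $ i' = 0"
    proof (intro ballI allI impI)
      fix i' k assume i': "i' \<in> insert i M" and k: "k \<noteq> i'"
      show "f' k $ i' = 0"
      proof (cases "i' = i")
        case True then show ?thesis using kill k by (simp add: f'_def a_def)
      next
        case False
        then have "i' \<in> M" using i' by auto
        then have "f k $ i' = 0" "f i $ i' = 0" using fz k False by auto
        then show ?thesis by (simp add: f'_def)
      qed
    qed
    show ?case using f'A f's f'z by blast
  qed
  from main[of "{i. d $ i \<le> 0}"] show ?thesis by auto
qed

lemma ext_split:
  assumes "extreme_ray_gen C c" "x \<in> C" "c - x \<in> C"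
  shows "\<exists>s\<ge>0. x = s *\<^sub>R c"
  using assms unfolding extreme_ray_gen_def
  by (metis add_diff_cancel_left' diff_add_cancel)

lemma reduce_AGE:
  fixes A :: "nat^'m::finite^'n::finite" and c :: "real^'m"
  assumes ext: "extreme_ray_gen (C_POLY_SAGE A) c"
  shows "\<exists>k. sig_rep A c \<in> C_AGE A k"
proof -
  define d where "d = sig_rep A c"
  have cP: "c \<in> C_POLY_SAGE A" and c0: "c \<noteq> 0" using ext by (auto simp: extreme_ray_gen_def)
  then have "d \<in> C_SAGE A" by (simp add: C_POLY_SAGE_def d_def)
  from process[OF this] obtain f where fA: "\<forall>k. f k \<in> C_AGE A k" and fs: "(\<Sum>k\<in>UNIV. f k) = d"
    and fz: "\<forall>i k. d $ i \<le> 0 \<longrightarrow> k \<noteq> i \<longrightarrow> f k $ i = 0" by blast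
  have dodd: "d $ j = - \<bar>c $ j\<bar>" if "\<not> even_col A j" for j using that by (simp add: d_def sig_rep_nth)
  have deven: "d $ j = c $ j" if "even_col A j" for j using that by (simp add: d_def sig_rep_nth)
  have fz': "f k $ j = 0" if "\<not> even_col A j" "k \<noteq> j" for j k using fz dodd[OF that(1)] that(2) by auto
  have fjj: "f j $ j = d $ j" if "\<not> even_col A j" for j
  proof -
    have "(\<Sum>k\<in>UNIV. f k $ j) = d $ j" using fs by (metis sum_component)
    moreover have "(\<Sum>k\<in>UNIV. f k $ j) = f j $ j + (\<Sum>k\<in>UNIV-{j}. f k $ j)" by (simp add: sum.remove[of UNIV j])
    moreover have "(\<Sum>k\<in>UNIV-{j}. f k $ j) = 0" using fz'[OF that] by (intro sum.neutral) auto
    ultimately show ?thesis by simp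
  qed
  define u where "u k = (\<chi> j. if even_col A j then f k $ j else (if k = j then c $ j else 0))" for k
  have sr: "sig_rep A (u k) = f k" for k
  proof (subst vec_eq_iff, intro allI)
    fix j show "sig_rep A (u k) $ j = f k $ j"
      using fz'[of j k] fjj[of j] dodd[of j] by (auto simp: u_def sig_rep_nth)
  qed
  have sr2: "sig_rep A (c - u k) = d - f k" for k
  proof (subst vec_eq_iff, intro allI)
    fix j show "sig_rep A (c - u k) $ j = (d - f k) $ j"
      using fz'[of j k] fjj[of j] dodd[of j] deven[of j] by (auto simp: u_def sig_rep_nth)
  qed
  have uP: "u k \<in> C_POLY_SAGE A" for k using sr fA AGE_SAGE[of "f k" A k] by (simp add: C_POLY_SAGE_def)
  have cuP: "c - u k \<in> C_POLY_SAGE A" for k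
  proof -
    have "d - f k = (\<Sum>k'\<in>UNIV-{k}. f k')" using fs by (simp add: sum.remove[of UNIV k] algebra_simps)
    moreover have "(\<Sum>k'\<in>UNIV-{k}. f k') \<in> C_SAGE A" using fA by (intro SAGE_sum) auto
    ultimately show ?thesis using sr2 by (simp add: C_POLY_SAGE_def)
  qed
  have usum: "(\<Sum>k\<in>UNIV. u k) = c"
  proof (subst vec_eq_iff, intro allI)
    fix j
    show "(\<Sum>k\<in>UNIV. u k) $ j = c $ j"
    proof (cases "even_col A j")
      case True
      have "(\<Sum>k\<in>UNIV. f k $ j) = d $ j" using fs by (metis sum_component)
      then show ?thesis using True deven[OF True] by (simp add: u_def)
    next
      case False
      then show ?thesis by (simp add: u_def)
    qed
  qed
  obtain k where uk: "u k \<noteq> 0"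
  proof (rule ccontr)
    assume "\<not> thesis"
    then have "\<forall>k. u k = 0" using that by blast
    then have "(\<Sum>k\<in>UNIV. u k) = 0" by simp
    then show False using usum c0 by simp
  qed
  obtain s where s0: "s \<ge> 0" and us: "u k = s *\<^sub>R c" using ext_split[OF ext uP cuP] by blast
  have "s \<noteq> 0" using uk us by auto
  then have spos: "s > 0" using s0 by simp
  have "f k = s *\<^sub>R d" using sr[of k] us sig_rep_scale[OF s0, of A c] by (simp add: d_def)
  then have "d = (1/s) *\<^sub>R f k" using spos by simp
  then have "d \<in> C_AGE A k" using AGE_scale[of "f k" A k "1/s"] fA spos by simp
  then show ?thesis by (auto simp: d_def)
qed

lemma circ:
  fixes q :: "'m \<Rightarrow> 'a::euclidean_space"
  assumes fin: "finite T" and inj: "inj_on q T" and zT: "z \<notin> q ` T"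
    and pos: "\<forall>j\<in>T. \<nu> j > 0" and s1: "sum \<nu> T = 1" and comb: "(\<Sum>j\<in>T. \<nu> j *\<^sub>R q j) = z"
    and ind: "\<not> affine_dependent (q ` T)"
  shows "simplicial_circuit (insert z (q ` T))"
proof -
  define P where "P = q ` T"
  have finP: "finite P" using fin by (simp add: P_def)
  have zc: "z \<in> convex hull P"
  proof -
    have "(\<Sum>j\<in>T. \<nu> j *\<^sub>R q j) \<in> convex hull P"
      using pos by (intro convex_sum[OF fin convex_convex_hull s1]) (auto simp: P_def hull_inc less_imp_le)
    then show ?thesis using comb by simp
  qed
  have za: "z \<in> affine hull P" using zc convex_hull_subset_affine_hull by blast
  have zP: "z \<notin> P" using zT by (simp add: P_def)
  have dep: "affine_dependent (insert z P)"
    unfolding affine_dependent_def using za zP by (intro bexI[of _ z]) auto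
  have indP: "\<not> affine_dependent P" using ind by (simp add: P_def)
  have proper: "\<not> affine_dependent U" if U: "U \<subset> insert z P" for U
  proof (cases "z \<in> U")
    case False
    then have "U \<subseteq> P" using U by auto
    then show ?thesis using affine_independent_subset indP by blast
  next
    case True
    then obtain p0 where p0: "p0 \<in> P" "p0 \<notin> U" using U by auto
    then obtain j0 where j0: "j0 \<in> T" "p0 = q j0" by (auto simp: P_def)
    define Q where "Q = insert z (P - {p0})"
    have UQ: "U \<subseteq> Q" using U p0 by (auto simp: Q_def)
    have X: "P - {p0} = q ` (T - {j0})" using inj j0 by (auto simp: P_def inj_on_def)
    define v where "v = (\<Sum>j\<in>T-{j0}. (-(\<nu> j/\<nu> j0)) *\<^sub>R (-z + q j))"
    have n0: "\<nu> j0 > 0" using pos j0 by auto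
    have pz: "p0 = z + v"
    proof -
      have S1: "sum \<nu> (T-{j0}) = 1 - \<nu> j0" using s1 fin j0 by (simp add: sum_diff1)
      have Sz: "z = \<nu> j0 *\<^sub>R p0 + (\<Sum>j\<in>T-{j0}. \<nu> j *\<^sub>R q j)"
        using comb fin j0 by (simp add: sum.remove[of T j0])
      have "v = (\<Sum>j\<in>T-{j0}. (1/\<nu> j0) *\<^sub>R (\<nu> j *\<^sub>R z - \<nu> j *\<^sub>R q j))"
        unfolding v_def by (rule sum.cong) (auto simp: algebra_simps divide_inverse)
      also have "\<dots> = (1/\<nu> j0) *\<^sub>R ((\<Sum>j\<in>T-{j0}. \<nu> j) *\<^sub>R z - (\<Sum>j\<in>T-{j0}. \<nu> j *\<^sub>R q j))"
        by (simp add: scaleR_sum_right[symmetric] sum_subtractf scaleR_sum_left)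
      also have "\<dots> = (1/\<nu> j0) *\<^sub>R ((1 - \<nu> j0) *\<^sub>R z - (z - \<nu> j0 *\<^sub>R p0))"
      proof -
        have Sq: "(\<Sum>j\<in>T-{j0}. \<nu> j *\<^sub>R q j) = z - \<nu> j0 *\<^sub>R p0" using Sz by (simp add: algebra_simps)
        show ?thesis by (simp only: S1 Sq)
      qed
      also have "\<dots> = p0 - z" using n0 by (simp add: algebra_simps)
      finally show ?thesis by simp
    qed
    have vspan: "v \<in> span ((\<lambda>x. - z + x) ` (P - {p0}))"
      unfolding v_def X
      by (intro span_sum span_mul span_base) auto
    have p0Q: "p0 \<in> affine hull Q"
      unfolding Q_def affine_hull_insert_span_gen using pz vspan by blast
    have hQ: "affine hull Q = affine hull (insert z P)"
    proof
      show "affine hull Q \<subseteq> affine hull (insert z P)" by (rule hull_mono) (auto simp: Q_def)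
      show "affine hull (insert z P) \<subseteq> affine hull Q"
      proof (rule hull_minimal)
        show "insert z P \<subseteq> affine hull Q"
        proof
          fix x assume "x \<in> insert z P"
          then show "x \<in> affine hull Q"
            using p0Q by (cases "x = p0") (auto simp: Q_def intro: hull_inc)
        qed
      qed simp
    qed
    have "affine hull (insert z P) = affine hull P" by (rule hull_redundant[OF za])
    then have adQ: "aff_dim Q = aff_dim P" using hQ by (metis aff_dim_affine_hull)
    have cQ: "card Q = card P"
    proof -
      have "card (P - {p0}) = card P - 1" using p0 finP by simp
      moreover have "card P \<ge> 1" using p0 finP by (metis card_0_eq empty_iff less_one not_le)
      moreover have "z \<notin> P - {p0}" using zP by auto
      ultimately show ?thesis using finP by (simp add: Q_def)
    qed
    have "aff_dim P = int (card P) - 1" using indP affine_independent_iff_card by blast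
    then have "\<not> affine_dependent Q" using adQ cQ finP affine_independent_iff_card[of Q] by (simp add: Q_def)
    then show ?thesis using UQ affine_independent_subset by blast
  qed
  have circ: "is_circuit (insert z P)"
    unfolding is_circuit_def using finP dep proper by auto
  have "convex hull (insert z P) = convex hull P" by (rule hull_redundant[OF zc])
  then have "{x. x extreme_point_of (convex hull (insert z P))} = P"
    using extreme_point_of_convex_hull_affine_independent[OF indP] by auto
  moreover have "card (insert z P) - 1 = card P" using finP zP by simp
  ultimately show ?thesis using circ by (simp add: simplicial_circuit_def P_def)
qed

lemma acol_inj: "distinct_columns A \<Longrightarrow> inj (acol A)"
  unfolding inj_def distinct_columns_def acol_def
  by (metis (no_types, lifting) of_nat_eq_iff vec_eq_iff vec_lambda_beta)

lemma Sig_split: "Sig A v y = v$k * exp (acol A k \<bullet> y) + (\<Sum>j\<in>UNIV-{k}. v$j * exp (acol A j \<bullet> y))"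
  by (simp add: Sig_def sum.remove[of UNIV k])

lemma AGE_intro:
  assumes nn: "\<And>j. j \<noteq> k \<Longrightarrow> 0 \<le> v$j" and R: "k \<notin> R"
    and b: "\<And>y. -(v$k) * exp (acol A k \<bullet> y) \<le> (\<Sum>j\<in>R. v$j * exp (acol A j \<bullet> y))"
  shows "v \<in> C_AGE A k"
proof -
  have "0 \<le> Sig A v y" for y
  proof -
    have "(\<Sum>j\<in>R. v$j * exp (acol A j \<bullet> y)) \<le> (\<Sum>j\<in>UNIV-{k}. v$j * exp (acol A j \<bullet> y))"
      using R nn by (intro sum_mono2) auto
    then show ?thesis using b[of y] by (simp add: Sig_split[of A v y k])
  qed
  then show ?thesis using nn by (auto simp: C_AGE_def C_NNS_def)
qed

lemma amgm2: "2 * exp ((a+b)/2) \<le> exp a + exp (b::real)"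
proof -
  define u where "u = exp (a/2)"
  define v where "v = exp (b/2)"
  have "exp a = u * u" by (simp add: u_def exp_add[symmetric])
  moreover have "exp b = v * v" by (simp add: v_def exp_add[symmetric])
  moreover have "exp ((a+b)/2) = u * v" by (simp add: u_def v_def exp_add[symmetric] add_divide_distrib)
  moreover have "0 \<le> (u - v)*(u - v)" by simp
  ultimately show ?thesis by (simp add: algebra_simps)
qed

lemma caseB:
  fixes A :: "nat^'m::finite^'n::finite" and c :: "real^'m"
  assumes ext: "extreme_ray_gen (C_POLY_SAGE A) c"
    and kT: "k \<notin> T"
    and supp: "\<And>i. c$i \<noteq> 0 \<longleftrightarrow> (i = k \<or> i \<in> T)"
    and Tev: "\<And>j. j\<in>T \<Longrightarrow> even_col A j"
    and dpos: "\<And>j. j\<in>T \<Longrightarrow> sig_rep A c $ j > 0"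
    and dk: "sig_rep A c $ k = -\<beta>" and bpos: "\<beta> > 0"
    and \<nu>pos: "\<forall>j\<in>T. \<nu> j > 0" and \<nu>s: "sum \<nu> T = 1" and \<nu>c: "(\<Sum>j\<in>T. \<nu> j *\<^sub>R acol A j) = acol A k"
    and Lc: "ln \<beta> \<le> (\<Sum>j\<in>T. \<nu> j * ln (sig_rep A c $ j) - \<nu> j * ln (\<nu> j))"
    and \<mu>s: "sum \<mu> T = 0" and \<mu>c: "(\<Sum>j\<in>T. \<mu> j *\<^sub>R acol A j) = 0" and \<mu>nz: "\<exists>j\<in>T. \<mu> j \<noteq> 0"
  shows False
proof -
  define d where "d = sig_rep A c"
  have fin: "finite T" by simp
  have Tne: "T \<noteq> {}" using \<nu>s by auto
  have dc: "d$j = c$j" if "j \<in> T" for j using Tev[OF that] by (simp add: d_def sig_rep_nth)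
  define m0 where "m0 = Min (\<nu> ` T)"
  have m0pos: "m0 > 0" using \<nu>pos Tne fin by (simp add: m0_def)
  have m0le: "m0 \<le> \<nu> j" if "j \<in> T" for j using that fin by (simp add: m0_def)
  define M where "M = 1 + (\<Sum>j\<in>T. \<bar>\<mu> j\<bar>)"
  have Mpos: "M > 0" by (simp add: M_def sum_nonneg add_pos_nonneg)
  define t where "t = m0 / M"
  have tpos: "t > 0" using m0pos Mpos by (simp add: t_def)
  have tb: "t * \<bar>\<mu> j\<bar> < \<nu> j" if "j \<in> T" for j
  proof -
    have "\<bar>\<mu> j\<bar> \<le> (\<Sum>j\<in>T. \<bar>\<mu> j\<bar>)" using that fin by (intro member_le_sum) auto
    then have "\<bar>\<mu> j\<bar> < M" by (simp add: M_def)
    then have "t * \<bar>\<mu> j\<bar> < t * M" using tpos by simp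
    also have "\<dots> = m0" using Mpos by (simp add: t_def)
    finally show ?thesis using m0le[OF that] by simp
  qed
  define \<nu>1 where "\<nu>1 j = \<nu> j + t * \<mu> j" for j
  define \<nu>2 where "\<nu>2 j = \<nu> j - t * \<mu> j" for j
  have tb': "\<bar>t * \<mu> j\<bar> < \<nu> j" if "j \<in> T" for j using tb[OF that] tpos by (simp add: abs_mult)
  have \<nu>1pos: "\<forall>j\<in>T. \<nu>1 j > 0" using tb' by (force simp: \<nu>1_def abs_less_iff)
  have \<nu>2pos: "\<forall>j\<in>T. \<nu>2 j > 0" using tb' by (force simp: \<nu>2_def abs_less_iff)
  have \<nu>1s: "sum \<nu>1 T = 1" using \<nu>s \<mu>s by (simp add: \<nu>1_def sum.distrib sum_distrib_left[symmetric])
  have \<nu>2s: "sum \<nu>2 T = 1" using \<nu>s \<mu>s by (simp add: \<nu>2_def sum_subtractf sum_distrib_left[symmetric])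
  have \<nu>1c: "(\<Sum>j\<in>T. \<nu>1 j *\<^sub>R acol A j) = acol A k"
    using \<nu>c \<mu>c by (simp add: \<nu>1_def scaleR_add_left sum.distrib scaleR_scaleR[symmetric] scaleR_sum_right[symmetric] del: scaleR_scaleR)
  have \<nu>2c: "(\<Sum>j\<in>T. \<nu>2 j *\<^sub>R acol A j) = acol A k"
    using \<nu>c \<mu>c by (simp add: \<nu>2_def scaleR_diff_left sum_subtractf scaleR_scaleR[symmetric] scaleR_sum_right[symmetric] del: scaleR_scaleR)
  define lg where "lg j = ln (d$j) - ln (2 * \<nu> j)" for j
  define X where "X \<nu>' \<theta> = (\<chi> i. if i \<in> T then c$i * (\<nu>' i / (2 * \<nu> i)) else if i = k then \<theta> * c$k else 0)" for \<nu>' \<theta>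
  have piece: "X \<nu>' \<theta> \<in> C_POLY_SAGE A"
    if p: "\<forall>j\<in>T. \<nu>' j > 0" "sum \<nu>' T = 1" "(\<Sum>j\<in>T. \<nu>' j *\<^sub>R acol A j) = acol A k" "\<theta> \<ge> 0"
      "\<theta> * \<beta> \<le> exp (\<Sum>j\<in>T. \<nu>' j * lg j)" for \<nu>' \<theta>
  proof -
    define v where "v = sig_rep A (X \<nu>' \<theta>)"
    have vT: "v$j = d$j * (\<nu>' j / (2 * \<nu> j))" if "j \<in> T" for j
      using that Tev[OF that] dc[OF that] by (simp add: v_def X_def sig_rep_nth)
    have vk: "v$k = \<theta> * d$k"
      using kT p(4) by (simp add: v_def X_def sig_rep_nth d_def abs_mult)
    have vo: "v$i = 0" if "i \<notin> T" "i \<noteq> k" for i using that by (simp add: v_def X_def sig_rep_nth)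
    have vpos: "v$j > 0" if "j \<in> T" for j
      using vT[OF that] dpos[OF that] p(1) \<nu>pos that by (simp add: d_def)
    have nn: "0 \<le> v$j" if "j \<noteq> k" for j
      using vpos vo that by (cases "j \<in> T") (auto intro: less_imp_le)
    have ent: "(\<Sum>j\<in>T. \<nu>' j * ln (v$j) - \<nu>' j * ln (\<nu>' j)) = (\<Sum>j\<in>T. \<nu>' j * lg j)"
    proof (rule sum.cong)
      fix j assume j: "j \<in> T"
      have "d$j > 0" using dpos[OF j] by (simp add: d_def)
      moreover have "\<nu>' j > 0" "\<nu> j > 0" using p(1) \<nu>pos j by auto
      ultimately have "ln (v$j) = ln (d$j) + ln (\<nu>' j) - ln (2 * \<nu> j)"
        by (simp add: vT[OF j] ln_mult ln_div)
      then have "\<nu>' j * ln (v$j) = \<nu>' j * (ln (d$j) + ln (\<nu>' j) - ln (2 * \<nu> j))" by simp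
      then show "\<nu>' j * ln (v$j) - \<nu>' j * ln (\<nu>' j) = \<nu>' j * lg j"
        by (simp add: lg_def algebra_simps)
    qed simp
    have "v \<in> C_AGE A k"
    proof (rule AGE_intro[OF nn kT])
      fix y
      have "exp ((\<Sum>j\<in>T. \<nu>' j * ln (v$j) - \<nu>' j * ln (\<nu>' j)) + (\<Sum>j\<in>T. \<nu>' j *\<^sub>R acol A j) \<bullet> y)
            \<le> (\<Sum>j\<in>T. v$j * exp (acol A j \<bullet> y))"
        using cert[OF fin _ _ p(2), of "\<lambda>j. v$j"] p(1) vpos by auto
      then have "exp (\<Sum>j\<in>T. \<nu>' j * lg j) * exp (acol A k \<bullet> y) \<le> (\<Sum>j\<in>T. v$j * exp (acol A j \<bullet> y))"
        using ent p(3) by (simp add: exp_add)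
      moreover have "-(v$k) * exp (acol A k \<bullet> y) \<le> exp (\<Sum>j\<in>T. \<nu>' j * lg j) * exp (acol A k \<bullet> y)"
        using p(5) vk dk by (simp add: d_def)
      ultimately show "-(v$k) * exp (acol A k \<bullet> y) \<le> (\<Sum>j\<in>T. v$j * exp (acol A j \<bullet> y))" by linarith
    qed
    then show ?thesis unfolding v_def by (rule POLY_I)
  qed
  define L where "L = (\<Sum>j\<in>T. \<nu> j * ln (d $ j) - \<nu> j * ln (\<nu> j))"
  define L1 where "L1 = (\<Sum>j\<in>T. \<nu>1 j * lg j)"
  define L2 where "L2 = (\<Sum>j\<in>T. \<nu>2 j * lg j)"
  have LL: "L1 + L2 = 2 * (L - ln 2)"
  proof -
    have "L1 + L2 = (\<Sum>j\<in>T. 2 * (\<nu> j * lg j))"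
      by (simp add: L1_def L2_def sum.distrib[symmetric] \<nu>1_def \<nu>2_def algebra_simps)
    also have "\<dots> = (\<Sum>j\<in>T. 2 * ((\<nu> j * ln (d $ j) - \<nu> j * ln (\<nu> j)) - \<nu> j * ln 2))"
    proof (rule sum.cong)
      fix j assume "j \<in> T"
      then have "\<nu> j > 0" using \<nu>pos by auto
      then show "2 * (\<nu> j * lg j) = 2 * ((\<nu> j * ln (d $ j) - \<nu> j * ln (\<nu> j)) - \<nu> j * ln 2)"
        by (simp add: lg_def ln_mult algebra_simps)
    qed simp
    also have "\<dots> = 2 * (L - ln 2)"
      by (simp add: L_def sum_distrib_left[symmetric] sum_subtractf sum_distrib_right[symmetric] \<nu>s)
    finally show ?thesis .
  qed
  have SB: "\<beta> \<le> exp L1 + exp L2"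
  proof -
    have "\<beta> = exp (ln \<beta>)" using bpos by simp
    also have "\<dots> \<le> exp L" using Lc by (simp add: L_def d_def)
    also have "\<dots> = 2 * exp ((L1 + L2)/2)"
    proof -
      have h: "(L1 + L2)/2 = L - ln 2" using LL by simp
      have e: "2 * exp (L - ln 2) = exp L" by (simp add: exp_diff)
      show ?thesis by (simp only: h e)
    qed
    also have "\<dots> \<le> exp L1 + exp L2" by (rule amgm2)
    finally show ?thesis .
  qed
  define S where "S = exp L1 + exp L2"
  have Spos: "S > 0" by (simp add: S_def add_pos_pos)
  define \<theta>1 where "\<theta>1 = exp L1 / S"
  define \<theta>2 where "\<theta>2 = exp L2 / S"
  have th12: "\<theta>1 + \<theta>2 = 1" using Spos by (simp add: \<theta>1_def \<theta>2_def S_def add_divide_distrib[symmetric])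
  have th1: "\<theta>1 * \<beta> \<le> exp L1"
  proof -
    have "\<theta>1 * \<beta> = exp L1 * (\<beta> / S)" by (simp add: \<theta>1_def)
    also have "\<dots> \<le> exp L1 * 1" using SB Spos by (intro mult_left_mono) (auto simp: S_def)
    finally show ?thesis by simp
  qed
  have th2: "\<theta>2 * \<beta> \<le> exp L2"
  proof -
    have "\<theta>2 * \<beta> = exp L2 * (\<beta> / S)" by (simp add: \<theta>2_def)
    also have "\<dots> \<le> exp L2 * 1" using SB Spos by (intro mult_left_mono) (auto simp: S_def)
    finally show ?thesis by simp
  qed
  have xP: "X \<nu>1 \<theta>1 \<in> C_POLY_SAGE A"
    using piece[OF \<nu>1pos \<nu>1s \<nu>1c _ th1[unfolded L1_def]] Spos by (simp add: \<theta>1_def)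
  have yP: "X \<nu>2 \<theta>2 \<in> C_POLY_SAGE A"
    using piece[OF \<nu>2pos \<nu>2s \<nu>2c _ th2[unfolded L2_def]] Spos by (simp add: \<theta>2_def)
  have cx: "c - X \<nu>1 \<theta>1 = X \<nu>2 \<theta>2"
  proof (subst vec_eq_iff, intro allI)
    fix i
    show "(c - X \<nu>1 \<theta>1) $ i = X \<nu>2 \<theta>2 $ i"
    proof (cases "i \<in> T")
      case True
      then have "\<nu> i > 0" using \<nu>pos by auto
      then show ?thesis using True by (simp add: X_def \<nu>1_def \<nu>2_def field_simps)
    next
      case False
      show ?thesis
      proof (cases "i = k")
        case True
        have "c$k = (\<theta>1 + \<theta>2) * c$k" using th12 by simp
        then show ?thesis using True False by (simp add: X_def algebra_simps)
      next
        case False2: False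
        then have "c$i = 0" using supp False by auto
        then show ?thesis using False False2 by (simp add: X_def)
      qed
    qed
  qed
  obtain s where s0: "s \<ge> 0" and xs: "X \<nu>1 \<theta>1 = s *\<^sub>R c"
    using ext_split[OF ext xP] yP cx by auto
  have eq1: "\<nu>1 j = 2 * s * \<nu> j" if "j \<in> T" for j
  proof -
    have "c$j \<noteq> 0" using supp that by auto
    moreover have "\<nu> j > 0" using \<nu>pos that by auto
    moreover have "c$j * (\<nu>1 j / (2 * \<nu> j)) = s * c$j"
      using arg_cong[OF xs, of "\<lambda>v. v $ j"] that by (simp add: X_def)
    ultimately show ?thesis by (simp add: field_simps)
  qed
  have "1 = sum \<nu>1 T" using \<nu>1s by simp
  also have "\<dots> = 2 * s * sum \<nu> T" using eq1 by (simp add: sum_distrib_left)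
  finally have "2 * s = 1" using \<nu>s by simp
  then have "\<mu> j = 0" if "j \<in> T" for j using eq1[OF that] tpos by (simp add: \<nu>1_def)
  then show False using \<mu>nz by auto
qed

lemma AGE_case:
  fixes A :: "nat^'m::finite^'n::finite" and c :: "real^'m"
  assumes dc: "distinct_columns A" and ext: "extreme_ray_gen (C_POLY_SAGE A) c"
    and dA: "sig_rep A c \<in> C_AGE A k"
  shows "(\<exists>p. acol A ` {i. c $ i \<noteq> 0} = {p}) \<or> simplicial_circuit (acol A ` {i. c $ i \<noteq> 0})"
proof -
  define d where "d = sig_rep A c"
  have c0: "c \<noteq> 0" using ext by (simp add: extreme_ray_gen_def)
  have dnn: "0 \<le> d$j" if "j \<noteq> k" for j using dA that by (auto simp: d_def C_AGE_def)
  have dz: "d$j = 0 \<longleftrightarrow> c$j = 0" for j by (simp add: d_def sig_rep_zero_iff)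
  have podd: "even_col A j \<and> d$j > 0 \<and> d$j = c$j" if "j \<noteq> k" "c$j \<noteq> 0" for j
  proof -
    have "d$j > 0" using dnn[OF that(1)] dz[of j] that(2) by auto
    moreover have "even_col A j"
    proof (rule ccontr)
      assume "\<not> even_col A j"
      then have "d$j = - \<bar>c$j\<bar>" by (simp add: d_def sig_rep_nth)
      then show False using \<open>d$j > 0\<close> by simp
    qed
    ultimately show ?thesis by (simp add: d_def sig_rep_nth)
  qed
  define mask where "mask P = (\<chi> i. if P i then c$i else 0)" for P
  have smask: "sig_rep A (mask P) = (\<chi> i. if P i then d$i else 0)" for P
    by (auto simp: vec_eq_iff mask_def sig_rep_nth d_def)
  have cmask: "c - mask P = mask (\<lambda>i. \<not> P i)" for P
    by (auto simp: vec_eq_iff mask_def)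
  show ?thesis
  proof (cases "d$k \<ge> 0")
    case True
    have dall: "0 \<le> d$i" for i using True dnn by (cases "i = k") auto
    obtain j where cj: "c$j \<noteq> 0" using c0 by (auto simp: vec_eq_iff)
    have only: "c$j' = 0" if "j' \<noteq> j" for j'
    proof (rule ccontr)
      assume cj': "c$j' \<noteq> 0"
      have xP: "mask (\<lambda>i. i = j) \<in> C_POLY_SAGE A"
        by (rule POLY_I[of _ _ k]) (simp add: smask dall AGE_nonneg)
      have yP: "c - mask (\<lambda>i. i = j) \<in> C_POLY_SAGE A"
        unfolding cmask by (rule POLY_I[of _ _ k]) (simp add: smask dall AGE_nonneg)
      obtain s where xs: "mask (\<lambda>i. i = j) = s *\<^sub>R c" using ext_split[OF ext xP yP] by blast
      have "0 = s * c$j'" using arg_cong[OF xs, of "\<lambda>v. v$j'"] that by (simp add: mask_def)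
      then have "s = 0" using cj' by simp
      then have "c$j = 0" using arg_cong[OF xs, of "\<lambda>v. v$j"] by (simp add: mask_def)
      then show False using cj by simp
    qed
    then have "{i. c$i \<noteq> 0} = {j}" using cj by auto
    then show ?thesis by auto
  next
    case False
    define \<beta> where "\<beta> = - d$k"
    have bpos: "\<beta> > 0" using False by (simp add: \<beta>_def)
    define T where "T = {j. j \<noteq> k \<and> c$j \<noteq> 0}"
    have kT: "k \<notin> T" by (simp add: T_def)
    have ck: "c$k \<noteq> 0" using False dz[of k] by auto
    have supp: "c$i \<noteq> 0 \<longleftrightarrow> (i = k \<or> i \<in> T)" for i using ck by (auto simp: T_def)
    have Tpos: "d$j > 0" if "j \<in> T" for j using podd[of j] that unfolding T_def by blast
    have Tev: "even_col A j" if "j \<in> T" for j using podd[of j] that unfolding T_def by blast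
    have sumT: "(\<Sum>j\<in>UNIV-{k}. d$j * exp (acol A j \<bullet> y)) = (\<Sum>j\<in>T. d$j * exp (acol A j \<bullet> y))" for y
    proof (rule sum.mono_neutral_right)
      show "\<forall>i\<in>UNIV - {k} - T. d $ i * exp (acol A i \<bullet> y) = 0"
        using dz by (auto simp: T_def)
    qed (auto simp: T_def)
    have nn0: "\<beta> * exp (acol A k \<bullet> y) \<le> (\<Sum>j\<in>T. d$j * exp (acol A j \<bullet> y))" for y
    proof -
      have "0 \<le> Sig A d y" using dA by (simp add: d_def C_AGE_def C_NNS_def)
      then show ?thesis by (simp add: Sig_split[of A d y k] sumT \<beta>_def)
    qed
    have nn: "\<beta> \<le> (\<Sum>j\<in>T. d$j * exp ((acol A j - acol A k) \<bullet> y))" for y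
    proof -
      have "(\<Sum>j\<in>T. d$j * exp ((acol A j - acol A k) \<bullet> y)) = (\<Sum>j\<in>T. d$j * exp (acol A j \<bullet> y)) / exp (acol A k \<bullet> y)"
        by (simp add: inner_diff_left exp_diff sum_divide_distrib)
      then show ?thesis using nn0[of y] by (simp add: le_divide_eq)
    qed
    obtain \<nu> where \<nu>0: "\<forall>j\<in>T. 0 \<le> \<nu> j" and \<nu>s: "sum \<nu> T = 1"
      and \<nu>c0: "(\<Sum>j\<in>T. \<nu> j *\<^sub>R (acol A j - acol A k)) = 0"
      and ent: "ln \<beta> \<le> (\<Sum>j\<in>T. \<nu> j * ln (d$j) - \<nu> j * ln (\<nu> j))"
      using exists_nu[OF bpos, of T "\<lambda>j. d$j" "\<lambda>j. acol A j - acol A k", OF Tpos nn] by blast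
    have \<nu>c: "(\<Sum>j\<in>T. \<nu> j *\<^sub>R acol A j) = acol A k"
    proof -
      have "(\<Sum>j\<in>T. \<nu> j *\<^sub>R (acol A j - acol A k)) = (\<Sum>j\<in>T. \<nu> j *\<^sub>R acol A j) - (sum \<nu> T) *\<^sub>R acol A k"
        by (simp add: scaleR_diff_right sum_subtractf scaleR_sum_left)
      then show ?thesis using \<nu>c0 \<nu>s by simp
    qed
    define R where "R = {j\<in>T. \<nu> j > 0}"
    have RT: "R \<subseteq> T" by (auto simp: R_def)
    have zeroR: "\<nu> j = 0" if "j \<in> T - R" for j using that \<nu>0 by (auto simp: R_def)
    have sR: "sum \<nu> R = 1"
      using \<nu>s sum.mono_neutral_right[of T R \<nu>] RT zeroR by simp
    have cR: "(\<Sum>j\<in>R. \<nu> j *\<^sub>R acol A j) = acol A k"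
      using \<nu>c sum.mono_neutral_right[of T R "\<lambda>j. \<nu> j *\<^sub>R acol A j"] RT zeroR by simp
    have eR: "ln \<beta> \<le> (\<Sum>j\<in>R. \<nu> j * ln (d$j) - \<nu> j * ln (\<nu> j))"
      using ent sum.mono_neutral_right[of T R "\<lambda>j. \<nu> j * ln (d$j) - \<nu> j * ln (\<nu> j)"] RT zeroR by simp
    have Rpos: "\<nu> j > 0" if "j \<in> R" for j using that by (simp add: R_def)
    have Rd: "d$j > 0" if "j \<in> R" for j using that RT Tpos by blast
    have finR: "finite R" by simp
    have certR: "\<beta> * exp (acol A k \<bullet> y) \<le> (\<Sum>j\<in>R. d$j * exp (acol A j \<bullet> y))" for y
    proof -
      have "exp ((\<Sum>j\<in>R. \<nu> j * ln (d$j) - \<nu> j * ln (\<nu> j)) + (\<Sum>j\<in>R. \<nu> j *\<^sub>R acol A j) \<bullet> y)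
            \<le> (\<Sum>j\<in>R. d$j * exp (acol A j \<bullet> y))"
        by (rule cert[OF finR Rpos Rd sR])
      moreover have "\<beta> \<le> exp (\<Sum>j\<in>R. \<nu> j * ln (d$j) - \<nu> j * ln (\<nu> j))"
      proof -
        have "exp (ln \<beta>) \<le> exp (\<Sum>j\<in>R. \<nu> j * ln (d$j) - \<nu> j * ln (\<nu> j))"
          using eR by (subst exp_le_cancel_iff)
        then show ?thesis using bpos by simp
      qed
      ultimately have "exp (\<Sum>j\<in>R. \<nu> j * ln (d$j) - \<nu> j * ln (\<nu> j)) * exp (acol A k \<bullet> y)
            \<le> (\<Sum>j\<in>R. d$j * exp (acol A j \<bullet> y))" "\<beta> \<le> exp (\<Sum>j\<in>R. \<nu> j * ln (d$j) - \<nu> j * ln (\<nu> j))"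
        using cR by (simp_all add: exp_add)
      moreover have "\<beta> * exp (acol A k \<bullet> y) \<le> exp (\<Sum>j\<in>R. \<nu> j * ln (d$j) - \<nu> j * ln (\<nu> j)) * exp (acol A k \<bullet> y)"
        using calculation(2) by (intro mult_right_mono) auto
      ultimately show ?thesis by linarith
    qed
    show ?thesis
    proof (cases "R = T")
      case False
      then obtain j0 where j0: "j0 \<in> T" "j0 \<notin> R" using RT by auto
      have j0k: "j0 \<noteq> k" using j0 kT by auto
      have xP: "mask (\<lambda>i. i = j0) \<in> C_POLY_SAGE A"
      proof (rule POLY_I[of _ _ k], unfold smask, rule AGE_nonneg)
        fix i show "0 \<le> (\<chi> i. if i = j0 then d $ i else 0) $ i"
          using Tpos[OF j0(1)] by simp
      qed
      have yP: "c - mask (\<lambda>i. i = j0) \<in> C_POLY_SAGE A"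
        unfolding cmask
      proof (rule POLY_I[of _ _ k], unfold smask, rule AGE_intro[of k _ R])
        show "\<And>j. j \<noteq> k \<Longrightarrow> 0 \<le> (\<chi> i. if \<not> i = j0 then d $ i else 0) $ j" using dnn by simp
        show "k \<notin> R" using kT RT by auto
        fix y
        have "(\<Sum>j\<in>R. (\<chi> i. if \<not> i = j0 then d $ i else 0) $ j * exp (acol A j \<bullet> y)) = (\<Sum>j\<in>R. d$j * exp (acol A j \<bullet> y))"
          using j0 by (intro sum.cong) auto
        then show "- (\<chi> i. if \<not> i = j0 then d $ i else 0) $ k * exp (acol A k \<bullet> y)
          \<le> (\<Sum>j\<in>R. (\<chi> i. if \<not> i = j0 then d $ i else 0) $ j * exp (acol A j \<bullet> y))"
          using certR[of y] j0k by (simp add: \<beta>_def)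
      qed
      obtain s where xs: "mask (\<lambda>i. i = j0) = s *\<^sub>R c" using ext_split[OF ext xP yP] by blast
      have "0 = s * c$k" using arg_cong[OF xs, of "\<lambda>v. v$k"] j0k by (simp add: mask_def)
      then have "s = 0" using ck by simp
      then have "c$j0 = 0" using arg_cong[OF xs, of "\<lambda>v. v$j0"] by (simp add: mask_def)
      then show ?thesis using j0 by (simp add: T_def)
    next
      case True
      then have \<nu>pos: "\<forall>j\<in>T. \<nu> j > 0" by (auto simp: R_def)
      have inj: "inj_on (acol A) T" using acol_inj[OF dc] by (simp add: inj_on_def inj_def)
      show ?thesis
      proof (cases "affine_dependent (acol A ` T)")
        case True
        then obtain U where U1: "sum U (acol A ` T) = 0" and U2: "\<exists>v\<in>acol A ` T. U v \<noteq> 0"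
          and U3: "(\<Sum>v\<in>acol A ` T. U v *\<^sub>R v) = 0"
          using affine_dependent_explicit_finite[of "acol A ` T"] by auto
        define \<mu> where "\<mu> j = U (acol A j)" for j
        have \<mu>s: "sum \<mu> T = 0" using U1 sum.reindex[OF inj, of U] by (simp add: \<mu>_def o_def)
        have \<mu>c: "(\<Sum>j\<in>T. \<mu> j *\<^sub>R acol A j) = 0"
          using U3 sum.reindex[OF inj, of "\<lambda>v. U v *\<^sub>R v"] by (simp add: \<mu>_def o_def)
        have \<mu>nz: "\<exists>j\<in>T. \<mu> j \<noteq> 0" using U2 by (auto simp: \<mu>_def)
        have False
          using caseB[OF ext kT supp Tev _ _ bpos \<nu>pos \<nu>s \<nu>c _ \<mu>s \<mu>c \<mu>nz] Tpos ent
          by (simp add: d_def \<beta>_def)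
        then show ?thesis ..
      next
        case False
        have zT: "acol A k \<notin> acol A ` T" using acol_inj[OF dc] kT by (auto simp: inj_def)
        have "simplicial_circuit (insert (acol A k) (acol A ` T))"
          by (rule circ[OF _ inj zT \<nu>pos \<nu>s \<nu>c False]) simp
        moreover have "acol A ` {i. c $ i \<noteq> 0} = insert (acol A k) (acol A ` T)"
          using supp by auto
        ultimately show ?thesis by simp
      qed
    qed
  qed
qed

theorem mainTheorem17:
  fixes A :: "nat^'m::finite^'n::finite" and c :: "real^'m"
  assumes "distinct_columns A"
    and "extreme_ray_gen (C_POLY_SAGE A) c"
  shows "(\<exists>p. acol A ` {i. c $ i \<noteq> 0} = {p}) \<or>
         simplicial_circuit (acol A ` {i. c $ i \<noteq> 0})"
proof -
  obtain k where "sig_rep A c \<in> C_AGE A k" using reduce_AGE[OF assms(2)] by blast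
  then show ?thesis using AGE_case[OF assms] by blast
qed

end
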